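(* Every connected graph that contains no induced subgraph isomorphic to $P_4$ and no induced subgraph isomorphic to $2K_2$ is detour covered.
   Context: All graphs are finite and simple. $P_4$ is the path on $4$ vertices and $2K_2$ is the graph consisting of two vertex-disjoint edges. A detour of a graph is a longest path in it; a graph is detour covered if every vertex lies in some detour. *)

theory Defs
  imports Main
begin

definition simple_graph :: "'a set \<Rightarrow> ('a \<Rightarrow> 'a \<Rightarrow> bool) \<Rightarrow> bool" where
  "simple_graph V E \<longleftrightarrow> finite V \<and> (\<forall>x y. E x y \<longrightarrow> x \<in> V \<and> y \<in> V)
     \<and> (\<forall>x y. E x y \<longrightarrow> E y x) \<and> (\<forall>x. \<not> E x x)"

definition is_path :: "'a set \<Rightarrow> ('a \<Rightarrow> 'a \<Rightarrow> bool) \<Rightarrow> 'a list \<Rightarrow> bool" where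
  "is_path V E p \<longleftrightarrow> p \<noteq> [] \<and> distinct p \<and> set p \<subseteq> V
     \<and> (\<forall>i. Suc i < length p \<longrightarrow> E (p ! i) (p ! Suc i))"

definition connected_graph :: "'a set \<Rightarrow> ('a \<Rightarrow> 'a \<Rightarrow> bool) \<Rightarrow> bool" where
  "connected_graph V E \<longleftrightarrow> (\<forall>u\<in>V. \<forall>v\<in>V. \<exists>p. is_path V E p \<and> hd p = u \<and> last p = v)"

definition is_detour :: "'a set \<Rightarrow> ('a \<Rightarrow> 'a \<Rightarrow> bool) \<Rightarrow> 'a list \<Rightarrow> bool" where
  "is_detour V E p \<longleftrightarrow> is_path V E p \<and> (\<forall>q. is_path V E q \<longrightarrow> length q \<le> length p)"

definition detour_covered :: "'a set \<Rightarrow> ('a \<Rightarrow> 'a \<Rightarrow> bool) \<Rightarrow> bool" where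
  "detour_covered V E \<longleftrightarrow> (\<forall>v\<in>V. \<exists>p. is_detour V E p \<and> v \<in> set p)"

definition has_induced :: "'a set \<Rightarrow> ('a \<Rightarrow> 'a \<Rightarrow> bool) \<Rightarrow> 'b set \<Rightarrow> ('b \<Rightarrow> 'b \<Rightarrow> bool) \<Rightarrow> bool" where
  "has_induced V E W F \<longleftrightarrow> (\<exists>f. inj_on f W \<and> f ` W \<subseteq> V
     \<and> (\<forall>x\<in>W. \<forall>y\<in>W. E (f x) (f y) \<longleftrightarrow> F x y))"

definition P4_V :: "nat set" where "P4_V = {0,1,2,3}"
definition P4_E :: "nat \<Rightarrow> nat \<Rightarrow> bool" where
  "P4_E x y \<longleftrightarrow> x \<in> P4_V \<and> y \<in> P4_V \<and> (x = y + 1 \<or> y = x + 1)"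

definition K2K2_V :: "nat set" where "K2K2_V = {0,1,2,3}"
definition K2K2_E :: "nat \<Rightarrow> nat \<Rightarrow> bool" where
  "K2K2_E x y \<longleftrightarrow> {x, y} = {0, 1} \<or> {x, y} = {2, 3::nat}"

end

theory Submission
  imports Defs
begin

lemma succ_upt: "(\<And>i. a \<le> i \<Longrightarrow> Suc i < b \<Longrightarrow> R i (Suc i)) \<Longrightarrow> successively R [a..<b]"
  by (auto simp: successively_conv_nth)

lemma mk_path:
  assumes "distinct B" "set B \<subseteq> V" "L \<noteq> []" "distinct L" "set L \<subseteq> {..<length B}"
    "successively (\<lambda>a b. E (B!a) (B!b)) L"
  shows "is_path V E (map ((!) B) L)"
proof -
  have "inj_on ((!) B) (set L)" using assms(1,5) by (intro inj_on_nth) auto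
  moreover have "set (map ((!) B) L) \<subseteq> V" using assms(2,5) by (auto dest!: nth_mem[of _ B])
  moreover have "successively E (map ((!) B) L)" using assms(6) by (simp add: successively_map)
  then have "\<forall>i. Suc i < length (map ((!) B) L) \<longrightarrow> E (map ((!) B) L ! i) (map ((!) B) L ! Suc i)"
    using successively_conv_nth by blast
  ultimately show ?thesis using assms(3,4) unfolding is_path_def
    by (simp add: distinct_map)
qed

lemma is_path_succ: "is_path V E p \<Longrightarrow> successively E p"
  by (simp add: is_path_def successively_conv_nth)

lemma P4_ind:
  assumes "distinct [a,b,c,d]" "a \<in> V" "b \<in> V" "c \<in> V" "d \<in> V"
    "E a b" "E b c" "E c d" "\<not> E a c" "\<not> E a d" "\<not> E b d" "\<And>x y. E x y \<Longrightarrow> E y x"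
    "\<And>x. \<not> E x x"
  shows "has_induced V E P4_V P4_E"
  unfolding has_induced_def
proof (intro exI[of _ "\<lambda>i. [a,b,c,d]!i"] conjI)
  show "inj_on (\<lambda>i. [a,b,c,d]!i) P4_V" using assms(1) unfolding P4_V_def inj_on_def by auto
  show "(\<lambda>i. [a,b,c,d]!i) ` P4_V \<subseteq> V" using assms(2-5) unfolding P4_V_def by auto
  show "\<forall>x\<in>P4_V. \<forall>y\<in>P4_V. E ([a, b, c, d] ! x) ([a, b, c, d] ! y) = P4_E x y"
    using assms(6-13) unfolding P4_E_def P4_V_def by auto
qed

lemma K2K2_ind:
  assumes "distinct [a,b,c,d]" "a \<in> V" "b \<in> V" "c \<in> V" "d \<in> V"
    "E a b" "E c d" "\<not> E a c" "\<not> E a d" "\<not> E b c" "\<not> E b d" "\<And>x y. E x y \<Longrightarrow> E y x"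
    "\<And>x. \<not> E x x"
  shows "has_induced V E K2K2_V K2K2_E"
  unfolding has_induced_def
proof (intro exI[of _ "\<lambda>i. [a,b,c,d]!i"] conjI)
  show "inj_on (\<lambda>i. [a,b,c,d]!i) K2K2_V" using assms(1) unfolding K2K2_V_def inj_on_def by auto
  show "(\<lambda>i. [a,b,c,d]!i) ` K2K2_V \<subseteq> V" using assms(2-5) unfolding K2K2_V_def by auto
  show "\<forall>x\<in>K2K2_V. \<forall>y\<in>K2K2_V. E ([a, b, c, d] ! x) ([a, b, c, d] ! y) = K2K2_E x y"
    using assms(6-13) unfolding K2K2_E_def K2K2_V_def by (auto simp: doubleton_eq_iff)
qed

lemma is_path_iff: "is_path V E p \<longleftrightarrow> p \<noteq> [] \<and> distinct p \<and> set p \<subseteq> V \<and> successively E p"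
  by (simp add: is_path_def successively_conv_nth)

lemma key:
  assumes sg: "simple_graph V E" and conn: "connected_graph V E"
    and nP4: "\<not> has_induced V E P4_V P4_E" and n2K2: "\<not> has_induced V E K2K2_V K2K2_E"
    and P: "is_path V E P" and longest: "\<And>q. is_path V E q \<Longrightarrow> length q \<le> length P"
    and vV: "v \<in> V" and vP: "v \<notin> set P"
  shows "\<exists>Q. is_path V E Q \<and> v \<in> set Q \<and> length P \<le> length Q"
proof -
  define k where "k = length P"
  define B where "B = P @ [v]"
  have sym: "\<And>x y. E x y \<Longrightarrow> E y x" and irr: "\<And>x. \<not> E x x"
    and EV: "\<And>x y. E x y \<Longrightarrow> x \<in> V \<and> y \<in> V"
    using sg unfolding simple_graph_def by blast+
  have k1: "k \<ge> 1" using P unfolding is_path_def k_def by (cases P) auto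
  have Bk: "B!k = v" unfolding B_def k_def by simp
  have BP: "\<And>i. i < k \<Longrightarrow> B!i = P!i" unfolding B_def k_def by (simp add: nth_append)
  have dP: "distinct P" and sP: "set P \<subseteq> V" using P unfolding is_path_def by auto
  have dB: "distinct B" using dP vP unfolding B_def by simp
  have sB: "set B \<subseteq> V" using sP vV unfolding B_def by simp
  have lenB: "length B = Suc k" unfolding B_def k_def by simp
  have chain: "\<And>i. Suc i < k \<Longrightarrow> E (P!i) (P!Suc i)" using P unfolding is_path_def k_def by blast
  have Pin: "\<And>i. i < k \<Longrightarrow> P!i \<in> V" using sP unfolding k_def by auto
  have Pinj: "\<And>i j. i < k \<Longrightarrow> j < k \<Longrightarrow> P!i = P!j \<longleftrightarrow> i = j"
    using dP unfolding k_def by (simp add: nth_eq_iff_index_eq)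
  have vPi: "\<And>i. i < k \<Longrightarrow> P!i \<noteq> v" using vP unfolding k_def by (metis nth_mem)
  have segP: "\<And>a b. b \<le> k \<Longrightarrow> successively (\<lambda>a b. E (B!a) (B!b)) [a..<b]"
    by (rule succ_upt) (simp add: BP chain)
  have mk: "\<exists>Q. is_path V E Q \<and> v \<in> set Q \<and> length P \<le> length Q"
    if L: "L \<noteq> []" "distinct L" "set L \<subseteq> {..k}" "k \<in> set L" "k \<le> length L"
      "successively (\<lambda>a b. E (B!a) (B!b)) L" for L
  proof -
    have "set L \<subseteq> {..<length B}" using L(3) lenB by auto
    then have "is_path V E (map ((!) B) L)" using mk_path[OF dB sB L(1,2) _ L(6)] by blast
    moreover have "v \<in> set (map ((!) B) L)" using L(4) Bk by force
    ultimately show ?thesis using L(5) unfolding k_def by (intro exI[of _ "map ((!) B) L"]) auto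
  qed
  have "\<exists>w. E v w"
  proof -
    have "P!0 \<in> V" using Pin k1 by auto
    then obtain p where p: "is_path V E p" "hd p = v" "last p = P!0"
      using conn vV unfolding connected_graph_def by blast
    have "length p \<ge> 2"
    proof (rule ccontr)
      assume "\<not> ?thesis" then have "length p = 1" using p(1) unfolding is_path_def by (cases p) (auto simp: Suc_le_eq)
      then have "hd p = last p" by (cases p) auto
      then show False using p vPi k1 by auto
    qed
    then have "E (p!0) (p!1)" using p(1) unfolding is_path_def by auto
    moreover have "p!0 = v" using p(2) p(1) by (simp add: hd_conv_nth is_path_def)
    ultimately show ?thesis by auto
  qed
  then obtain w where vw: "E v w" by blast
  have wV: "w \<in> V" using EV vw by blast
  have "\<exists>j<k. E v (P!j)"
  proof (rule ccontr)
    assume nj: "\<not> ?thesis"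
    then have wP: "w \<notin> set P" using vw unfolding k_def by (metis in_set_conv_nth)
    have wv: "w \<noteq> v" using vw irr by auto
    show False
    proof (cases "k = 1")
      case True
      have "is_path V E [v,w]" using vw vV wV wv unfolding is_path_iff by auto
      then show False using longest True unfolding k_def by fastforce
    next
      case False then have k2: "k \<ge> 2" using k1 by auto
      have n0: "\<not> E v (P!0)" "\<not> E v (P!1)" using nj k2 by auto
      have n1: "\<not> E w (P!0)"
      proof
        assume a: "E w (P!0)"
        have "P \<noteq> []" using k1 unfolding k_def by auto
        then have "is_path V E (w # P)" using P a wP wV unfolding is_path_iff
          by (auto simp: successively_Cons hd_conv_nth)
        then show False using longest by fastforce
      qed
      have n2: "\<not> E w (P!1)"
      proof
        assume a: "E w (P!1)"
        define B2 where "B2 = P @ [v, w]"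
        have "is_path V E (map ((!) B2) ([k, Suc k] @ [1..<k]))"
        proof (rule mk_path)
          show "distinct B2" using dP vP wP wv unfolding B2_def by auto
          show "set B2 \<subseteq> V" using sP vV wV unfolding B2_def by auto
          show "successively (\<lambda>a b. E (B2 ! a) (B2 ! b)) ([k, Suc k] @ [1..<k])"
            unfolding successively_append_iff
          proof (intro conjI)
            show "successively (\<lambda>a b. E (B2 ! a) (B2 ! b)) [1..<k]"
              by (rule succ_upt) (simp add: B2_def k_def nth_append chain[unfolded k_def])
            show "successively (\<lambda>a b. E (B2 ! a) (B2 ! b)) [k, Suc k]"
              using vw by (simp add: B2_def k_def nth_append)
            show "[k, Suc k] = [] \<or> [1..<k] = [] \<or> E (B2 ! last [k, Suc k]) (B2 ! hd [1..<k])"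
              using a k2 by (simp add: B2_def k_def nth_append)
          qed
        qed (use k2 in \<open>auto simp: B2_def k_def\<close>)
        then show False using longest k2 unfolding k_def by fastforce
      qed
      have ne: "P \<noteq> []" "0 < length P" "1 < length P" using k2 unfolding k_def by auto
      have d: "w \<noteq> P!0" "w \<noteq> P!1" "P!0 \<noteq> P!1" "P!0 \<noteq> v" "P!1 \<noteq> v"
        using wP k2 Pinj[of 0 1] vPi[of 0] vPi[of 1] nth_mem[OF ne(2)] nth_mem[OF ne(3)]
        by auto
      have "has_induced V E K2K2_V K2K2_E"
        by (rule K2K2_ind[of v w "P!0" "P!1" V E])
          (use n0 n1 n2 vw chain[of 0] k2 vV wV Pin[of 0] Pin[of 1] d wv sym irr in auto)
      then show False using n2K2 by blast
    qed
  qed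
  then obtain j where jk: "j < k" and vj: "E v (P!j)" by blast
  have Ej: "\<And>a b. a < k \<Longrightarrow> b < k \<Longrightarrow> E (P!a) (P!b) \<Longrightarrow> E (B!a) (B!b)" using BP by simp
  have vjB: "E (B!k) (B!j)" "E (B!j) (B!k)" using vj sym Bk BP jk by auto
  show ?thesis
  proof (cases "j = 0")
    case True
    show ?thesis
      by (rule mk[of "k # [0..<k]"]) (use True vjB k1 segP in \<open>auto simp: successively_Cons\<close>)
  next
    case j0: False
    show ?thesis
    proof (cases "j = k - 1")
      case True
      show ?thesis
        by (rule mk[of "[0..<k] @ [k]"]) (use True vjB k1 segP in \<open>auto simp: successively_append_iff\<close>)
    next
      case jk1: False
      show ?thesis
      proof (cases "j = 1")
        case True
        show ?thesis
          by (rule mk[of "k # [1..<k]"]) (use True vjB k1 jk jk1 segP in \<open>auto simp: successively_Cons\<close>)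
      next
        case j1: False
        show ?thesis
        proof (cases "j = k - 2")
          case True
          show ?thesis
            by (rule mk[of "[0..<k-1] @ [k]"]) (use True vjB k1 jk jk1 segP in \<open>auto simp: successively_append_iff numeral_2_eq_2\<close>)
        next
          case jk2: False
          have j2: "2 \<le> j" "j + 3 \<le> k" using j0 j1 jk1 jk2 jk by auto
          show ?thesis
          proof (cases "E v (P!Suc j)")
            case True
            then have "E (B!k) (B!Suc j)" using Bk BP j2 by auto
            moreover have "E (B!(j-1)) (B!j)" using chain[of "j-1"] BP j2 by auto
            ultimately show ?thesis
              by (intro mk[of "[0..<Suc j] @ k # [Suc j..<k]"]) 
                 (use vjB j2 segP in \<open>auto simp: successively_append_iff successively_Cons\<close>)
          next
            case nvj1: False
            define j' where "j' = (LEAST i. j < i \<and> (i = k \<or> (i < k \<and> E v (P!i))))"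
            have j'1: "j < j' \<and> (j' = k \<or> (j' < k \<and> E v (P!j')))"
              unfolding j'_def by (rule LeastI[of _ k]) (use jk in auto)
            have j'k: "j' \<le> k" unfolding j'_def by (rule Least_le) (use jk in auto)
            have j'2: "\<And>i. j < i \<Longrightarrow> i < j' \<Longrightarrow> \<not> E v (P!i)"
            proof
              fix i assume "j < i" "i < j'" "E v (P!i)"
              moreover have "i < k" using \<open>i < j'\<close> j'k by auto
              ultimately have "j' \<le> i" unfolding j'_def by (intro Least_le) auto
              then show False using \<open>i < j'\<close> by auto
            qed
            have j'3: "j' \<noteq> Suc j" using j'1 nvj1 j2 by auto
            show ?thesis
            proof (cases "j' = Suc (Suc j)")
              case True
              then have "E (B!k) (B!Suc (Suc j))" using Bk BP j2 j'1 by auto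
              moreover have "E (B!(j-1)) (B!j)" using chain[of "j-1"] BP j2 by auto
              ultimately show ?thesis
                by (intro mk[of "[0..<Suc j] @ k # [Suc (Suc j)..<k]"]) 
                   (use vjB j2 segP in \<open>auto simp: successively_append_iff successively_Cons\<close>)
            next
              case False
              then have j3: "j + 3 \<le> j'" using j'1 j'3 by auto
              have adj: "E (P!j) (P!(j+1+d))" if "j+1+d < j'" for d
                using that
              proof (induction d)
                case 0 then show ?case using chain[of j] j2 by auto
              next
                case (Suc d)
                define i where "i = j+1+d"
                have IH: "E (P!j) (P!i)" using Suc unfolding i_def by auto
                have ik: "Suc i < k" "Suc i < j'" using Suc j'k unfolding i_def by auto
                show ?case
                proof (rule ccontr)
                  assume "\<not> ?case"
                  then have n: "\<not> E (P!j) (P!Suc i)" unfolding i_def by auto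
                  have "has_induced V E P4_V P4_E"
                    by (rule P4_ind[of v "P!j" "P!i" "P!Suc i"])
                       (use n IH vj chain[of i] ik j'2[of i] j'2[of "Suc i"] vV Pin vPi Pinj sym irr jk
                          in \<open>auto simp: i_def\<close>)
                  then show False using nP4 by blast
                qed
              qed
              have adj': "E (P!j) (P!i)" if "j < i" "i < j'" for i
                using adj[of "i - j - 1"] that by auto
              have J1: "E (B!(j'-1)) (B!j)" using adj'[of "j'-1"] sym BP j3 j'k by auto
              have J2: "E (B!k) (B!j')" if "j' < k" using j'1 that Bk BP by auto
              have J3: "successively (\<lambda>a b. E (B!a) (B!b)) (k # [j'..<k])"
              proof (cases "j' < k")
                case True then show ?thesis using J2 segP[of k j'] by (simp add: successively_Cons)
              next
                case False then show ?thesis by simp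
              qed
              have ib: "j-2 < k" "j-1 < k" "Suc j < k" "Suc (Suc j) < k" using j2 by auto
              have dd: "P!(j-2) \<noteq> P!(j-1)" "P!(j-2) \<noteq> P!(Suc j)" "P!(j-2) \<noteq> P!(Suc (Suc j))"
                "P!(j-1) \<noteq> P!(Suc j)" "P!(j-1) \<noteq> P!(Suc (Suc j))" "P!(Suc j) \<noteq> P!(Suc (Suc j))"
                using Pinj ib j2 by auto
              have eab: "E (P!(j-2)) (P!(j-1))" using chain[of "j-2"] j2 by (simp add: Suc_diff_Suc numeral_2_eq_2)
              have ecd: "E (P!(Suc j)) (P!(Suc (Suc j)))" using chain[of "Suc j"] j2 by simp
              show ?thesis
              proof (cases "E (P!(j-1)) (P!(Suc j))")
                case True
                then have "E (B!(j-1)) (B!(Suc j))" using BP ib by auto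
                then show ?thesis
                  by (intro mk[of "[0..<j] @ [Suc j..<j'] @ [j, k] @ [j'..<k]"])
                     (use vjB j2 j3 j'k J3 segP J1 in \<open>auto simp: successively_append_iff successively_Cons\<close>)
              next
                case nbc: False
                show ?thesis
                proof (cases "E (P!(j-1)) (P!(Suc (Suc j)))")
                  case True
                  then have "E (B!(j-1)) (B!(Suc (Suc j)))" using BP ib by auto
                  then show ?thesis
                    by (intro mk[of "[0..<j] @ [Suc (Suc j)..<j'] @ [j, k] @ [j'..<k]"])
                       (use vjB j2 j3 j'k J3 segP J1 in \<open>auto simp: successively_append_iff successively_Cons\<close>)
                next
                  case nbd: False
                  show ?thesis
                  proof (cases "E (P!(j-2)) (P!(Suc j))")
                    case True
                    then have "E (B!(j-2)) (B!(Suc j))" using BP ib by auto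
                    then show ?thesis
                      by (intro mk[of "[0..<j-1] @ [Suc j..<j'] @ [j, k] @ [j'..<k]"])
                         (use vjB j2 j3 j'k J3 segP J1 in \<open>auto simp: successively_append_iff successively_Cons numeral_2_eq_2\<close>)
                  next
                    case nac: False
                    show ?thesis
                    proof (cases "E (P!(j-2)) (P!(Suc (Suc j)))")
                      case True
                      have "has_induced V E P4_V P4_E"
                        by (rule P4_ind[of "P!(j-1)" "P!(j-2)" "P!(Suc (Suc j))" "P!(Suc j)"])
                           (use True nbc nbd nac eab ecd dd ib Pin sym irr in auto)
                      then show ?thesis using nP4 by blast
                    next
                      case False
                      have "has_induced V E K2K2_V K2K2_E"
                        by (rule K2K2_ind[of "P!(j-2)" "P!(j-1)" "P!(Suc j)" "P!(Suc (Suc j))"])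
                           (use False nbc nbd nac eab ecd dd ib Pin sym irr in auto)
                      then show ?thesis using n2K2 by blast
                    qed
                  qed
                qed
              qed
            qed
          qed
        qed
      qed
    qed
  qed
qed

theorem theorem10:
  fixes V :: "'a set" and E :: "'a \<Rightarrow> 'a \<Rightarrow> bool"
  assumes "simple_graph V E"
    and "connected_graph V E"
    and "\<not> has_induced V E P4_V P4_E"
    and "\<not> has_induced V E K2K2_V K2K2_E"
  shows "detour_covered V E"
  unfolding detour_covered_def
proof
  fix x assume xV: "x \<in> V"
  have finV: "finite V" using assms(1) unfolding simple_graph_def by blast
  have bound: "length p \<le> card V" if "is_path V E p" for p
  proof -
    have "length p = card (set p)" using that unfolding is_path_def by (simp add: distinct_card)
    also have "\<dots> \<le> card V" using that finV unfolding is_path_def by (intro card_mono) auto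
    finally show ?thesis .
  qed
  have px: "is_path V E [x]" using xV unfolding is_path_def by auto
  obtain n where n: "\<exists>p. is_path V E p \<and> length p = n"
    and nmax: "\<And>m. (\<exists>p. is_path V E p \<and> length p = m) \<Longrightarrow> m \<le> n"
    using Nat.ex_has_greatest_nat[of "\<lambda>m. \<exists>p. is_path V E p \<and> length p = m" 1 "card V"] px bound
    by fastforce
  obtain P where P: "is_path V E P" "length P = n" using n by blast
  have longest: "\<And>q. is_path V E q \<Longrightarrow> length q \<le> length P" using nmax P(2) by blast
  have win: "\<exists>p. is_detour V E p \<and> x \<in> set p"
    if "is_path V E Q" "x \<in> set Q" "length P \<le> length Q" for Q
    using that longest unfolding is_detour_def by (intro exI[of _ Q]) fastforce
  show "\<exists>p. is_detour V E p \<and> x \<in> set p"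
  proof (cases "x \<in> set P")
    case True then show ?thesis using win[of P] P by auto
  next
    case False
    then obtain Q where "is_path V E Q" "x \<in> set Q" "length P \<le> length Q"
      using key[OF assms P(1) longest xV] by blast
    then show ?thesis using win by blast
  qed
qed

end
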